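(* Let $X$ be a topological space and let $U$ be an ultrafilter on $\omega$. If $\varphi:Y_U\rightarrow \mathcal{F}(X)$ is lower semicontinuous and $\sup_{n<\omega}|\varphi(n)|<\omega$, then $\varphi$ has a continuous selection, i.e., there is a continuous $s:Y_U\rightarrow X$ with $s(y)\in\varphi(y)$ for all $y\in Y_U$.
   Context: $\mathcal{F}(X)$ denotes the set of nonempty closed subsets of $X$. A map $\varphi:Y\rightarrow\mathcal{F}(X)$ is lower semicontinuous if for every open $W\subseteq X$ the set $\{y\in Y:\varphi(y)\cap W\neq\emptyset\}$ is open in $Y$. For a filter $F$ on $\omega$, $Y_F$ is the space with underlying set $\omega\cup\{\infty\}$ in which each point of $\omega$ is isolated and the neighborhoods of $\infty$ are the sets $A\cup\{\infty\}$ with $A\in F$. *)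

theory Defs
  imports "HOL-Analysis.Analysis"
begin

definition ultrafilter_on_nat :: "nat set set \<Rightarrow> bool" where
  "ultrafilter_on_nat U \<longleftrightarrow>
     UNIV \<in> U \<and> {} \<notin> U \<and>
     (\<forall>A B. A \<in> U \<and> A \<subseteq> B \<longrightarrow> B \<in> U) \<and>
     (\<forall>A B. A \<in> U \<and> B \<in> U \<longrightarrow> A \<inter> B \<in> U) \<and>
     (\<forall>A. A \<in> U \<or> - A \<in> U)"

text \<open>The space Y_F on nat option: Some n are the points of omega (isolated),
  None is the point infinity, whose neighbourhoods are A \<union> {infinity} with A \<in> F.\<close>
definition Y_top :: "nat set set \<Rightarrow> nat option topology" where
  "Y_top F = topology (\<lambda>S. None \<in> S \<longrightarrow> {n. Some n \<in> S} \<in> F)"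

definition closed_nonempty_sets :: "'a topology \<Rightarrow> 'a set set" where
  "closed_nonempty_sets X = {C. closedin X C \<and> C \<noteq> {}}"

definition lower_semicontinuous_setmap ::
  "'b topology \<Rightarrow> 'a topology \<Rightarrow> ('b \<Rightarrow> 'a set) \<Rightarrow> bool" where
  "lower_semicontinuous_setmap Y X \<phi> \<longleftrightarrow>
     (\<forall>W. openin X W \<longrightarrow> openin Y {y \<in> topspace Y. \<phi> y \<inter> W \<noteq> {}})"

lemma istopology_Y_top:
  assumes "\<forall>A B. A \<in> F \<and> A \<subseteq> B \<longrightarrow> B \<in> F"
      and "\<forall>A B. A \<in> F \<and> B \<in> F \<longrightarrow> A \<inter> B \<in> F"
  shows "istopology (\<lambda>S. None \<in> S \<longrightarrow> {n. Some n \<in> S} \<in> F)"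
  unfolding istopology_def
proof (intro conjI allI impI)
  fix S T assume H: "None \<in> S \<longrightarrow> {n. Some n \<in> S} \<in> F" "None \<in> T \<longrightarrow> {n. Some n \<in> T} \<in> F"
    and N: "None \<in> S \<inter> T"
  have "{n. Some n \<in> S \<inter> T} = {n. Some n \<in> S} \<inter> {n. Some n \<in> T}" by blast
  then show "{n. Some n \<in> S \<inter> T} \<in> F" using H N assms(2) by auto
next
  fix K assume K: "\<forall>S\<in>K. None \<in> S \<longrightarrow> {n. Some n \<in> S} \<in> F" and N: "None \<in> \<Union>K"
  then obtain S where "S \<in> K" "None \<in> S" by blast
  then have "{n. Some n \<in> S} \<in> F" using K by blast
  moreover have "{n. Some n \<in> S} \<subseteq> {n. Some n \<in> \<Union>K}" using \<open>S \<in> K\<close> by blast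
  ultimately show "{n. Some n \<in> \<Union>K} \<in> F" using assms(1) by blast
qed

end

theory Submission
  imports Defs
begin

lemma openin_Y_top:
  assumes "ultrafilter_on_nat U"
  shows "openin (Y_top U) S \<longleftrightarrow> (None \<in> S \<longrightarrow> {n. Some n \<in> S} \<in> U)"
proof -
  have "istopology (\<lambda>S. None \<in> S \<longrightarrow> {n. Some n \<in> S} \<in> U)"
    using assms istopology_Y_top unfolding ultrafilter_on_nat_def by blast
  then show ?thesis unfolding Y_top_def by (simp add: topology_inverse')
qed

lemma topspace_Y_top:
  assumes "ultrafilter_on_nat U"
  shows "topspace (Y_top U) = UNIV"
proof -
  have "openin (Y_top U) UNIV" using assms openin_Y_top[OF assms] unfolding ultrafilter_on_nat_def by simp
  then show ?thesis using openin_subset by blast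
qed

lemma uf_union:
  assumes "ultrafilter_on_nat U" "A \<union> B \<in> U"
  shows "A \<in> U \<or> B \<in> U"
proof (rule ccontr)
  assume "\<not> ?thesis"
  then have "-A \<in> U" "-B \<in> U" using assms(1) unfolding ultrafilter_on_nat_def by blast+
  then have "-A \<inter> -B \<inter> (A \<union> B) \<in> U" using assms unfolding ultrafilter_on_nat_def by blast
  moreover have "-A \<inter> -B \<inter> (A \<union> B) = {}" by blast
  ultimately show False using assms(1) unfolding ultrafilter_on_nat_def by simp
qed

lemma uf_Union:
  fixes k :: nat and A :: "nat \<Rightarrow> nat set"
  assumes "ultrafilter_on_nat U" "(\<Union>i<k. A i) \<in> U"
  shows "\<exists>i<k. A i \<in> U"
  using assms(2)
proof (induction k)
  case 0
  then show ?case using assms(1) unfolding ultrafilter_on_nat_def by simp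
next
  case (Suc k)
  have "(\<Union>i<Suc k. A i) = (\<Union>i<k. A i) \<union> A k" by (auto simp: lessThan_Suc)
  then have "(\<Union>i<k. A i) \<in> U \<or> A k \<in> U" using uf_union[OF assms(1)] Suc.prems by simp
  then show ?case using Suc.IH less_Suc_eq by blast
qed

lemma surj_enum:
  assumes "finite A" "A \<noteq> {}" "card A \<le> k"
  shows "\<exists>f. f ` {..<k} = A"
proof -
  obtain h where h: "bij_betw h {..<card A} A"
    using assms(1) ex_bij_betw_nat_finite lessThan_atLeast0 by metis
  have c: "card A > 0" using assms by auto
  define f where "f i = h (min i (card A - 1))" for i
  have "f ` {..<k} = h ` {..<card A}"
  proof
    show "f ` {..<k} \<subseteq> h ` {..<card A}" unfolding f_def using c by auto
    show "h ` {..<card A} \<subseteq> f ` {..<k}"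
    proof
      fix y assume "y \<in> h ` {..<card A}"
      then obtain i where "i < card A" "y = h i" by auto
      then have "y = f i" "i < k" using assms(3) unfolding f_def by auto
      then show "y \<in> f ` {..<k}" by blast
    qed
  qed
  then show ?thesis using h bij_betw_imp_surj_on by metis
qed

theorem mainTheorem1:
  fixes X :: "'a topology" and U :: "nat set set" and \<phi> :: "nat option \<Rightarrow> 'a set"
  assumes "ultrafilter_on_nat U"
    and "\<forall>y. \<phi> y \<in> closed_nonempty_sets X"
    and "lower_semicontinuous_setmap (Y_top U) X \<phi>"
    and "\<exists>k::nat. \<forall>n. finite (\<phi> (Some n)) \<and> card (\<phi> (Some n)) \<le> k"
  shows "\<exists>s. continuous_map (Y_top U) X s \<and> (\<forall>y. s y \<in> \<phi> y)"
proof -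
  note uf = assms(1)
  have ne: "\<phi> y \<noteq> {}" "\<phi> y \<subseteq> topspace X" for y
    using assms(2) closedin_subset unfolding closed_nonempty_sets_def by auto
  obtain k where k: "\<forall>n. finite (\<phi> (Some n)) \<and> card (\<phi> (Some n)) \<le> k" using assms(4) by blast
  have "\<forall>n. \<exists>f. f ` {..<k} = \<phi> (Some n)" using k ne surj_enum by blast
  then obtain g where g: "\<And>n. g n ` {..<k} = \<phi> (Some n)" by metis
  obtain x where x: "x \<in> \<phi> None" using ne by blast
  have "\<exists>i<k. \<forall>W. openin X W \<and> x \<in> W \<longrightarrow> {n. g n i \<in> W} \<in> U"
  proof (rule ccontr)
    assume "\<not> ?thesis"
    then have "\<forall>i\<in>{..<k}. \<exists>W. openin X W \<and> x \<in> W \<and> {n. g n i \<in> W} \<notin> U" by auto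
    then obtain Wf where Wf: "\<And>i. i<k \<Longrightarrow> openin X (Wf i) \<and> x \<in> Wf i \<and> {n. g n i \<in> Wf i} \<notin> U"
      by (metis lessThan_iff)
    have kpos: "k > 0"
    proof (rule ccontr)
      assume "\<not> k > 0"
      then have "\<phi> (Some 0) = {}" using g[of 0] by simp
      then show False using ne by blast
    qed
    define W where "W = topspace X \<inter> (\<Inter>i<k. Wf i)"
    have oW: "openin X W" unfolding W_def
    proof -
      have "openin X (\<Inter>i \<in> {..<k}. Wf i)"
        by (rule openin_INT2) (use kpos Wf in auto)
      then show "openin X (topspace X \<inter> (\<Inter>i<k. Wf i))"
        using openin_subset by (metis inf.absorb_iff2)
    qed
    have xW: "x \<in> W" unfolding W_def using Wf x ne by auto
    have "openin (Y_top U) {y \<in> topspace (Y_top U). \<phi> y \<inter> W \<noteq> {}}"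
      using assms(3) oW unfolding lower_semicontinuous_setmap_def by blast
    then have "{n. Some n \<in> {y \<in> topspace (Y_top U). \<phi> y \<inter> W \<noteq> {}}} \<in> U"
      using openin_Y_top[OF uf] x xW topspace_Y_top[OF uf] by auto
    then have in1: "{n. \<phi> (Some n) \<inter> W \<noteq> {}} \<in> U" using topspace_Y_top[OF uf] by simp
    have "{n. \<phi> (Some n) \<inter> W \<noteq> {}} \<subseteq> (\<Union>i<k. {n. g n i \<in> Wf i})"
    proof
      fix n assume "n \<in> {n. \<phi> (Some n) \<inter> W \<noteq> {}}"
      then obtain z where "z \<in> \<phi> (Some n)" "z \<in> W" by auto
      then obtain i where "i < k" "z = g n i" using g[of n] by auto
      then show "n \<in> (\<Union>i<k. {n. g n i \<in> Wf i})" using \<open>z \<in> W\<close> unfolding W_def by auto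
    qed
    then have "(\<Union>i<k. {n. g n i \<in> Wf i}) \<in> U" using in1 uf unfolding ultrafilter_on_nat_def by blast
    then obtain i where "i < k" "{n. g n i \<in> Wf i} \<in> U" using uf_Union[OF uf] by blast
    then show False using Wf by blast
  qed
  then obtain i where i: "i < k" "\<And>W. openin X W \<Longrightarrow> x \<in> W \<Longrightarrow> {n. g n i \<in> W} \<in> U" by blast
  define s where "s y = (case y of None \<Rightarrow> x | Some n \<Rightarrow> g n i)" for y
  have sin: "s y \<in> \<phi> y" for y
    using x g i(1) unfolding s_def by (cases y) auto
  have "continuous_map (Y_top U) X s"
    unfolding continuous_map_def
  proof (intro conjI allI impI)
    show "s \<in> topspace (Y_top U) \<rightarrow> topspace X" using sin ne by blast
  next
    fix W assume oW: "openin X W"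
    show "openin (Y_top U) {y \<in> topspace (Y_top U). s y \<in> W}"
      unfolding openin_Y_top[OF uf] topspace_Y_top[OF uf]
      using i(2)[OF oW] by (simp add: s_def)
  qed
  then show ?thesis using sin by blast
qed

end
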